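(* Let $b\ge1$ and let $f\in\mathcal{M}^b$ be not identically $0$, with set-array representation $(A_1,A_2,\ldots,A_b)$ (so $A_1\neq\emptyset$). Let $f^*\in\mathcal{M}^b$ be the multiset with set-array representation $(A_1,\emptyset,\ldots,\emptyset)$. Then $d(f^* )\ge d(f)$, and the inequality is strict if $A_2\neq\emptyset$.
   Context: $\mathcal{M}^b$ is the set of finitely supported functions $f:\mathbb{N}\to\{0,\ldots,b\}$, $\mathbb{N}=\{0,1,\ldots\}$. The set-array representation of $f$ is $(A_1,\ldots,A_b)$ with $A_i=\{a:f(a)\ge i\}$. Multiset addition is coordinatewise on set arrays, $(A_i)_i+(B_i)_i=(A_i+B_i)_i$, where $S+T=\{s+t:s\in S,t\in T\}$ and $S+\emptyset=\emptyset$. $g\in\mathcal{M}^b$ is a divisor of $f$ if $f=g+h$ for some $h\in\mathcal{M}^b$; $d(f)$ is the number of divisors of $f$. *)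

theory Defs
  imports Main
begin

definition Mb :: "nat \<Rightarrow> (nat \<Rightarrow> nat) set" where
  "Mb b = {f. (\<forall>a. f a \<le> b) \<and> finite {a. f a \<noteq> 0}}"

definition setarr :: "(nat \<Rightarrow> nat) \<Rightarrow> nat \<Rightarrow> nat set" where
  "setarr f i = {a. i \<le> f a}"

definition sumset :: "nat set \<Rightarrow> nat set \<Rightarrow> nat set" where
  "sumset S T = {s + t | s t. s \<in> S \<and> t \<in> T}"

text \<open>g is a divisor of f in M^b: f = g + h for some h in M^b, addition being
  coordinatewise sumset addition of the set arrays (A_1,...,A_b).\<close>
definition divisor :: "nat \<Rightarrow> (nat \<Rightarrow> nat) \<Rightarrow> (nat \<Rightarrow> nat) \<Rightarrow> bool" where
  "divisor b g f \<longleftrightarrow> g \<in> Mb b \<and>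
     (\<exists>h \<in> Mb b. \<forall>i \<in> {1..b}. setarr f i = sumset (setarr g i) (setarr h i))"

definition num_divisors :: "nat \<Rightarrow> (nat \<Rightarrow> nat) \<Rightarrow> nat" where
  "num_divisors b f = card {g. divisor b g f}"

definition fstar :: "(nat \<Rightarrow> nat) \<Rightarrow> nat \<Rightarrow> nat" where
  "fstar f a = (if a \<in> setarr f 1 then 1 else 0)"

end

theory Submission
  imports Defs
begin

lemma fstar_1: "setarr (fstar f) 1 = setarr f 1"
  by (auto simp: setarr_def fstar_def)

lemma fstar_2: "i \<ge> 2 \<Longrightarrow> setarr (fstar f) i = {}"
  by (auto simp: setarr_def fstar_def)

lemma sumset_empty2: "sumset S {} = {}" and sumset_empty1: "sumset {} S = {}"
  by (auto simp: sumset_def)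

lemma sumset_zero: "sumset S {0} = S"
  by (auto simp: sumset_def)

lemma div_sub:
  assumes "divisor b g f"
  shows "divisor b g (fstar f)"
proof -
  from assms obtain h where g: "g \<in> Mb b" and h: "h \<in> Mb b"
    and eq: "\<forall>i \<in> {1..b}. setarr f i = sumset (setarr g i) (setarr h i)"
    unfolding divisor_def by blast
  define h' where "h' = (\<lambda>a. if a \<in> setarr h 1 then 1 else (0::nat))"
  have b1: "b \<ge> 1" if "i \<in> {1..b}" for i using that by auto
  have fin: "finite {a. h a \<noteq> 0}" using h by (simp add: Mb_def)
  have s1: "setarr h' 1 = setarr h 1" by (auto simp: h'_def setarr_def)
  have s2: "i \<ge> 2 \<Longrightarrow> setarr h' i = {}" for i by (auto simp: h'_def setarr_def)
  have "{a. h' a \<noteq> 0} = {a. h a \<noteq> 0}" by (auto simp: h'_def setarr_def)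
  hence hM: "b \<ge> 1 \<Longrightarrow> h' \<in> Mb b" using fin by (auto simp: Mb_def h'_def)
  moreover have eq2: "\<forall>i \<in> {1..b}. setarr (fstar f) i = sumset (setarr g i) (setarr h' i)"
  proof
    fix i assume i: "i \<in> {1..b}"
    show "setarr (fstar f) i = sumset (setarr g i) (setarr h' i)"
    proof (cases "i = 1")
      case True
      have "setarr f 1 = sumset (setarr g 1) (setarr h 1)" using eq i True by blast
      thus ?thesis using True by (simp only: fstar_1 s1)
    next
      case False hence "i \<ge> 2" using i by auto
      thus ?thesis by (simp add: fstar_2 s2 sumset_empty2)
    qed
  qed
  ultimately show ?thesis
  proof (cases "b \<ge> 1")
    case True thus ?thesis using g hM eq2
      unfolding divisor_def by blast
  next
    case False thus ?thesis using g h unfolding divisor_def by auto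
  qed
qed

lemma div_self:
  assumes "b \<ge> 1" "f \<in> Mb b"
  shows "divisor b (fstar f) (fstar f)"
proof -
  define h :: "nat \<Rightarrow> nat" where "h = (\<lambda>a. if a = 0 then 1 else 0)"
  have "{a. h a \<noteq> 0} = {0}" by (auto simp: h_def)
  hence hM: "h \<in> Mb b" using assms by (auto simp: Mb_def h_def)
  have "{a. fstar f a \<noteq> 0} = {a. f a \<noteq> 0}" by (auto simp: fstar_def setarr_def)
  hence fM: "fstar f \<in> Mb b" using assms by (auto simp: Mb_def fstar_def)
  have s1: "setarr h 1 = {0}" by (auto simp: h_def setarr_def)
  have "\<forall>i \<in> {1..b}. setarr (fstar f) i = sumset (setarr (fstar f) i) (setarr h i)"
  proof
    fix i assume i: "i \<in> {1..b}"
    show "setarr (fstar f) i = sumset (setarr (fstar f) i) (setarr h i)"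
    proof (cases "i = 1")
      case True thus ?thesis by (simp only: True s1 sumset_zero)
    next
      case False hence "i \<ge> 2" using i by auto
      thus ?thesis by (simp add: fstar_2 sumset_empty1)
    qed
  qed
  thus ?thesis using hM fM unfolding divisor_def by blast
qed

lemma div_not:
  assumes "f \<in> Mb b" "setarr f 2 \<noteq> {}"
  shows "\<not> divisor b (fstar f) f"
proof
  assume d: "divisor b (fstar f) f"
  from assms obtain a where "2 \<le> f a" by (auto simp: setarr_def)
  moreover have "f a \<le> b" using assms by (auto simp: Mb_def)
  ultimately have "2 \<in> {1..b}" by auto
  with d have "setarr f 2 = {}" unfolding divisor_def
    by (auto simp: fstar_2 sumset_empty1)
  with assms show False by simp
qed

lemma div_fin:
  assumes "f \<in> Mb b" "f \<noteq> (\<lambda>_. 0)"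
  shows "finite {g. divisor b g (fstar f)}"
proof -
  have finA: "finite (setarr f 1)" using assms(1)
    by (auto simp: Mb_def setarr_def elim: rev_finite_subset)
  define M where "M = Max (setarr f 1)"
  have sub: "{g. divisor b g (fstar f)} \<subseteq>
     {g. \<forall>x. (x \<in> {0..M} \<longrightarrow> g x \<in> {0..b}) \<and> (x \<notin> {0..M} \<longrightarrow> g x = 0)}"
  proof (safe)
    fix g x
    assume d: "divisor b g (fstar f)"
    then have gM: "g \<in> Mb b" by (simp add: divisor_def)
    then show "g x \<in> {0..b}" by (auto simp: Mb_def)
    assume "x \<notin> {0..M}"
    hence xM: "x > M" by auto
    show "g x = 0"
    proof (rule ccontr)
      assume "g x \<noteq> 0"
      hence x1: "x \<in> setarr g 1" by (auto simp: setarr_def)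
      from d obtain h where h: "h \<in> Mb b" and
        eq: "\<forall>i \<in> {1..b}. setarr (fstar f) i = sumset (setarr g i) (setarr h i)"
        unfolding divisor_def by blast
      have "b \<ge> 1" using gM \<open>g x \<noteq> 0\<close> by (auto simp: Mb_def intro: Suc_leI gr0I dest: spec[of _ x])
      with eq have "setarr (fstar f) 1 = sumset (setarr g 1) (setarr h 1)" by auto
      hence e1: "setarr f 1 = sumset (setarr g 1) (setarr h 1)" by (simp only: fstar_1)
      from assms(2) obtain a where "f a \<noteq> 0" by auto
      hence "a \<in> setarr f 1" by (auto simp: setarr_def)
      with e1 obtain t where "t \<in> setarr h 1" by (auto simp: sumset_def)
      with x1 e1 have "x + t \<in> setarr f 1" by (auto simp: sumset_def)
      hence "x + t \<le> M" unfolding M_def using finA by simp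
      with xM show False by simp
    qed
  qed
  show ?thesis
    by (rule rev_finite_subset[OF finite_set_of_finite_funs sub]) auto
qed

theorem mainTheorem18:
  fixes b :: nat and f :: "nat \<Rightarrow> nat"
  assumes "b \<ge> 1" and "f \<in> Mb b" and "f \<noteq> (\<lambda>_. 0)"
  shows "num_divisors b (fstar f) \<ge> num_divisors b f \<and>
         (setarr f 2 \<noteq> {} \<longrightarrow> num_divisors b (fstar f) > num_divisors b f)"
proof -
  have sub: "{g. divisor b g f} \<subseteq> {g. divisor b g (fstar f)}" using div_sub by blast
  have fin: "finite {g. divisor b g (fstar f)}" using div_fin assms by blast
  have 1: "num_divisors b (fstar f) \<ge> num_divisors b f"
    unfolding num_divisors_def using card_mono[OF fin sub] .
  moreover have "num_divisors b (fstar f) > num_divisors b f" if "setarr f 2 \<noteq> {}"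
  proof -
    have "{g. divisor b g f} \<subset> {g. divisor b g (fstar f)}"
      using sub div_self[OF assms(1,2)] div_not[OF assms(2) that] by blast
    thus ?thesis unfolding num_divisors_def using psubset_card_mono[OF fin] by blast
  qed
  ultimately show ?thesis by blast
qed

end
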